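(* Let $n_1,n_2,n_3\in\mathbb{N}$, let $\sigma$ be a segment label map on $G=\{1,\dots,n_1\}\times\{1,\dots,n_2\}\times\{1,\dots,n_3\}$, fix any decomposition of $T$ into blocks, let $\tau=\mathrm{LABEL}(\sigma,T)$ and let $\tau'$ be the output of the block-wise method. Then for all 1-cells $t_1\in T$: $\tau(t_1)=0\Leftrightarrow\tau'(t_1)=0$.
   Context: Voxel grid and segmentation: $G=\{1,\dots,n_1\}\times\{1,\dots,n_2\}\times\{1,\dots,n_3\}$; voxels $v,w$ are adjacent iff $\sum_i|v_i-w_i|=1$. A segment label map is $\sigma:G\to\mathbb{N}=\{1,2,\dots\}$ such that each level set $\sigma^{-1}(l)$ is connected w.r.t. this adjacency. Topological grid: $T=\{1,\dots,2n_1-1\}\times\{1,\dots,2n_2-1\}\times\{1,\dots,2n_3-1\}$; a cell with exactly $j$ odd coordinates is a $j$-cell. Voxel $r$ corresponds to the 3-cell $2r-1$. Two cells are 6-neighbors if they differ by $1$ in exactly one coordinate. For a $j$-cell $t$, $\Gamma(t)$ is the set of 6-neighbors of $t$ in $T$ that are $(j+1)$-cells. Cells $t_1,t_2$ are connected, $t_1\leftrightarrow t_2$, iff there is $t\in T$ with $t_1,t_2\in\Gamma(t)$. Procedure LABEL: for a voxel box $\prod_i\{a_i,\dots,b_i\}\subseteq G$ let $B=\prod_i\{2a_i-1,\dots,2b_i-1\}$ be its cell box. $\mathrm{LABEL}(\sigma,B)$ produces $\lambda:B\to\mathbb{N}_0$: (1) $\lambda(2r-1)=\sigma(r)$ for 3-cells.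 (2) For $j=2,1,0$ in this order: for each $j$-cell $t\in B$ let $\theta(t)$ be the set of positive integers occurring exactly once in $(\lambda(s))_{s\in\Gamma(t)}$; $t$ is active iff $\theta(t)\ne\emptyset$, inactive $j$-cells get label $0$; the active $j$-cells of $B$ are partitioned into maximal sets of cells with equal $\theta$ that are connected by $\leftrightarrow$-paths inside the set; these classes are numbered $1,\dots,m_j(B)$ arbitrarily and each active $j$-cell gets its class number. Reference labeling: $\tau=\mathrm{LABEL}(\sigma,T)$. Block-wise method: for each axis $i$ choose odd integers $1=a^i_0<\dots<a^i_{m_i}=2n_i-1$; blocks are the boxes $\prod_i\{a^i_{k_i-1},\dots,a^i_{k_i}\}$. Step 1: $\lambda_B=\mathrm{LABEL}(\sigma,B)$ for each block. Step 2: with blocks ordered $B_1,\dots,B_K$, add offset $\sum_{k'<k}m_j(B_{k'})$ to each positive $j$-cell label of $\lambda_{B_k}$ ($j\in\{0,1,2\}$). Step 3: for $j\in\{1,2\}$, via union–find, unite the labels received in different blocks by any active $j$-cell lying in several blocks, and replace every positive $j$-cell label by its set representative. Step 4: for each 0-cell $t_0$ and each pair of distinct 1-cell labels occurring exactly once among the current labels of $\Gamma(t_0)$, merge the two labels if the corresponding 1-cells bound the same set of current 2-cell labels; if any merge took place at $t_0$, recompute the activity of $t_0$ and set its label to $0$ if inactive. The result is $\tau':T\to\mathbb{N}_0$. *)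

theory Defs
  imports Main
begin

type_synonym cell = "nat \<times> nat \<times> nat"

definition vgrid :: "nat \<Rightarrow> nat \<Rightarrow> nat \<Rightarrow> cell set" where
  "vgrid n1 n2 n3 = {1..n1} \<times> {1..n2} \<times> {1..n3}"

fun vadj :: "cell \<Rightarrow> cell \<Rightarrow> bool" where
  "vadj (x,y,z) (x',y',z') =
     (\<bar>int x - int x'\<bar> + \<bar>int y - int y'\<bar> + \<bar>int z - int z'\<bar> = 1)"

definition segment_map :: "nat \<Rightarrow> nat \<Rightarrow> nat \<Rightarrow> (cell \<Rightarrow> nat) \<Rightarrow> bool" where
  "segment_map n1 n2 n3 \<sigma> \<longleftrightarrow>
     (\<forall>v\<in>vgrid n1 n2 n3. \<sigma> v \<ge> 1) \<and>
     (\<forall>v\<in>vgrid n1 n2 n3. \<forall>w\<in>vgrid n1 n2 n3. \<sigma> v = \<sigma> w \<longrightarrow>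
        (\<lambda>a b. a \<in> vgrid n1 n2 n3 \<and> b \<in> vgrid n1 n2 n3 \<and> \<sigma> a = \<sigma> v \<and> \<sigma> b = \<sigma> v
               \<and> vadj a b)\<^sup>*\<^sup>* v w)"

definition tgrid :: "nat \<Rightarrow> nat \<Rightarrow> nat \<Rightarrow> cell set" where
  "tgrid n1 n2 n3 = {1..2*n1-1} \<times> {1..2*n2-1} \<times> {1..2*n3-1}"

fun cdim :: "cell \<Rightarrow> nat" where
  "cdim (x,y,z) = (if odd x then 1 else 0) + (if odd y then 1 else 0) + (if odd z then 1 else 0)"

text \<open>voxel r corresponds to the 3-cell 2r-1; inverse map\<close>
fun voxel_of :: "cell \<Rightarrow> cell" where
  "voxel_of (x,y,z) = ((x+1) div 2, (y+1) div 2, (z+1) div 2)"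

fun nbr6 :: "cell \<Rightarrow> cell \<Rightarrow> bool" where
  "nbr6 (x,y,z) (x',y',z') =
     ((\<bar>int x - int x'\<bar> = 1 \<and> y = y' \<and> z = z') \<or>
      (x = x' \<and> \<bar>int y - int y'\<bar> = 1 \<and> z = z') \<or>
      (x = x' \<and> y = y' \<and> \<bar>int z - int z'\<bar> = 1))"

definition Gam :: "nat \<Rightarrow> nat \<Rightarrow> nat \<Rightarrow> cell \<Rightarrow> cell set" where
  "Gam n1 n2 n3 t = {s \<in> tgrid n1 n2 n3. nbr6 t s \<and> cdim s = cdim t + 1}"

definition cconn :: "nat \<Rightarrow> nat \<Rightarrow> nat \<Rightarrow> cell \<Rightarrow> cell \<Rightarrow> bool" where
  "cconn n1 n2 n3 t1 t2 \<longleftrightarrow> (\<exists>t\<in>tgrid n1 n2 n3. t1 \<in> Gam n1 n2 n3 t \<and> t2 \<in> Gam n1 n2 n3 t)"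

definition theta :: "nat \<Rightarrow> nat \<Rightarrow> nat \<Rightarrow> (cell \<Rightarrow> nat) \<Rightarrow> cell \<Rightarrow> nat set" where
  "theta n1 n2 n3 lam t = {l. l > 0 \<and> card {s \<in> Gam n1 n2 n3 t. lam s = l} = 1}"

definition active :: "nat \<Rightarrow> nat \<Rightarrow> nat \<Rightarrow> (cell \<Rightarrow> nat) \<Rightarrow> cell \<Rightarrow> bool" where
  "active n1 n2 n3 lam t \<longleftrightarrow> theta n1 n2 n3 lam t \<noteq> {}"

section \<open>Procedure LABEL (relational: any admissible numbering of the classes)\<close>

definition same_class :: "nat \<Rightarrow> nat \<Rightarrow> nat \<Rightarrow> (cell \<Rightarrow> nat) \<Rightarrow> cell set \<Rightarrow> cell \<Rightarrow> cell \<Rightarrow> bool" where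
  "same_class n1 n2 n3 lam A t t' \<longleftrightarrow>
     theta n1 n2 n3 lam t = theta n1 n2 n3 lam t' \<and>
     (\<lambda>a b. a \<in> A \<and> b \<in> A \<and> theta n1 n2 n3 lam a = theta n1 n2 n3 lam t
            \<and> theta n1 n2 n3 lam b = theta n1 n2 n3 lam t \<and> cconn n1 n2 n3 a b)\<^sup>*\<^sup>* t t'"

definition is_LABEL :: "nat \<Rightarrow> nat \<Rightarrow> nat \<Rightarrow> (cell \<Rightarrow> nat) \<Rightarrow> cell set \<Rightarrow> (cell \<Rightarrow> nat) \<Rightarrow> bool" where
  "is_LABEL n1 n2 n3 \<sigma> B lam \<longleftrightarrow>
     (\<forall>t\<in>B. cdim t = 3 \<longrightarrow> lam t = \<sigma> (voxel_of t)) \<and>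
     (\<forall>j\<in>{0,1,2::nat}.
        (\<forall>t\<in>B. cdim t = j \<and> \<not> active n1 n2 n3 lam t \<longrightarrow> lam t = 0) \<and>
        (let A = {t \<in> B. cdim t = j \<and> active n1 n2 n3 lam t} in
          (\<forall>t\<in>A. \<forall>t'\<in>A. lam t = lam t' \<longleftrightarrow> same_class n1 n2 n3 lam A t t') \<and>
          (\<exists>m. lam ` A = {1..m})))"

definition mcount :: "nat \<Rightarrow> (cell \<Rightarrow> nat) \<Rightarrow> cell set \<Rightarrow> nat" where
  "mcount j lam B = card (lam ` {t \<in> B. cdim t = j \<and> lam t > 0})"

definition axis_decomp :: "nat \<Rightarrow> (nat \<Rightarrow> nat) \<Rightarrow> nat \<Rightarrow> bool" where
  "axis_decomp N a m \<longleftrightarrow> m \<ge> 1 \<and> a 0 = 1 \<and> a m = 2*N - 1 \<and>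
     (\<forall>k<m. a k < a (Suc k)) \<and> (\<forall>k\<le>m. odd (a k))"

fun blk :: "(nat \<Rightarrow> nat) \<Rightarrow> (nat \<Rightarrow> nat) \<Rightarrow> (nat \<Rightarrow> nat) \<Rightarrow> nat \<times> nat \<times> nat \<Rightarrow> cell set" where
  "blk a1 a2 a3 (k1,k2,k3) =
     {a1 (k1-1)..a1 k1} \<times> {a2 (k2-1)..a2 k2} \<times> {a3 (k3-1)..a3 k3}"

definition bnd :: "nat \<Rightarrow> nat \<Rightarrow> nat \<Rightarrow> (cell \<Rightarrow> nat) \<Rightarrow> cell \<Rightarrow> nat set" where
  "bnd n1 n2 n3 lam s = {lam u | u. u \<in> Gam n1 n2 n3 s \<and> lam u > 0}"

definition merge_pairs :: "nat \<Rightarrow> nat \<Rightarrow> nat \<Rightarrow> cell \<Rightarrow> (cell \<Rightarrow> nat) \<Rightarrow> (nat \<times> nat) set" where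
  "merge_pairs n1 n2 n3 t0 lam =
     {(l, l'). l \<noteq> l' \<and> l \<in> theta n1 n2 n3 lam t0 \<and> l' \<in> theta n1 n2 n3 lam t0 \<and>
        (\<exists>s s'. s \<in> Gam n1 n2 n3 t0 \<and> s' \<in> Gam n1 n2 n3 t0 \<and> lam s = l \<and> lam s' = l' \<and>
                bnd n1 n2 n3 lam s = bnd n1 n2 n3 lam s')}"

definition step4 :: "nat \<Rightarrow> nat \<Rightarrow> nat \<Rightarrow> cell \<Rightarrow> (cell \<Rightarrow> nat) \<Rightarrow> (cell \<Rightarrow> nat) \<Rightarrow> bool" where
  "step4 n1 n2 n3 t0 lam lam' \<longleftrightarrow>
     (let P = merge_pairs n1 n2 n3 t0 lam in
      \<exists>f :: nat \<Rightarrow> nat.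
        (\<forall>l. (l, f l) \<in> (P \<union> P\<inverse>)\<^sup>*) \<and>
        (\<forall>l l'. (l, l') \<in> (P \<union> P\<inverse>)\<^sup>* \<longrightarrow> f l = f l') \<and>
        (\<forall>t. cdim t = 1 \<longrightarrow> lam' t = f (lam t)) \<and>
        (\<forall>t. cdim t \<noteq> 1 \<and> t \<noteq> t0 \<longrightarrow> lam' t = lam t) \<and>
        lam' t0 = (if P \<noteq> {} \<and> \<not> active n1 n2 n3 lam' t0 then 0 else lam t0))"

section \<open>Block-wise method (relational: any admissible choices)\<close>

definition blockwise_output ::
  "nat \<Rightarrow> nat \<Rightarrow> nat \<Rightarrow> (cell \<Rightarrow> nat) \<Rightarrow> (nat \<Rightarrow> nat) \<Rightarrow> nat \<Rightarrow> (nat \<Rightarrow> nat) \<Rightarrow> nat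
     \<Rightarrow> (nat \<Rightarrow> nat) \<Rightarrow> nat \<Rightarrow> (cell \<Rightarrow> nat) \<Rightarrow> bool" where
  "blockwise_output n1 n2 n3 \<sigma> a1 m1 a2 m2 a3 m3 \<tau>' \<longleftrightarrow>
    (\<exists>(K::nat) (bo :: nat \<Rightarrow> nat \<times> nat \<times> nat) (lam :: nat \<Rightarrow> cell \<Rightarrow> nat)
       (rep :: nat \<Rightarrow> nat \<Rightarrow> nat) (\<tau>0 :: cell \<Rightarrow> nat)
       (N::nat) (e :: nat \<Rightarrow> cell) (st :: nat \<Rightarrow> cell \<Rightarrow> nat).
     let Bk = (\<lambda>k. blk a1 a2 a3 (bo k));
         off = (\<lambda>k t. lam k t + (\<Sum>k'<k. mcount (cdim t) (lam k') (Bk k')));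
         E = (\<lambda>j. {(off k t, off k' t) | k k' t. k < K \<and> k' < K \<and> t \<in> Bk k \<and> t \<in> Bk k'
                     \<and> cdim t = j \<and> lam k t > 0 \<and> lam k' t > 0});
         R = (\<lambda>j l. if j = 0 then l else rep j l)
     in
       \<comment> \<open>block ordering\<close>
       bij_betw bo {..<K} ({1..m1} \<times> {1..m2} \<times> {1..m3}) \<and>
       \<comment> \<open>Step 1\<close>
       (\<forall>k<K. is_LABEL n1 n2 n3 \<sigma> (Bk k) (lam k)) \<and>
       \<comment> \<open>Step 3: union-find for j = 1,2 with arbitrary representatives\<close>
       (\<forall>j\<in>{1,2::nat}. (\<forall>l. (l, rep j l) \<in> (E j)\<^sup>*) \<and>
                         (\<forall>l l'. (l, l') \<in> (E j)\<^sup>* \<longrightarrow> rep j l = rep j l')) \<and>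
       \<comment> \<open>labels after Steps 1--3\<close>
       (\<forall>t\<in>tgrid n1 n2 n3. cdim t = 3 \<longrightarrow> \<tau>0 t = \<sigma> (voxel_of t)) \<and>
       (\<forall>t\<in>tgrid n1 n2 n3. cdim t < 3 \<longrightarrow>
          (if (\<exists>k<K. t \<in> Bk k \<and> lam k t > 0)
           then (\<exists>k<K. t \<in> Bk k \<and> lam k t > 0 \<and> \<tau>0 t = R (cdim t) (off k t))
           else \<tau>0 t = 0)) \<and>
       \<comment> \<open>Step 4: process the 0-cells of T in some order\<close>
       bij_betw e {..<N} {t \<in> tgrid n1 n2 n3. cdim t = 0} \<and>
       st 0 = \<tau>0 \<and>
       (\<forall>i<N. step4 n1 n2 n3 (e i) (st i) (st (Suc i))) \<and>
       (\<forall>t\<in>tgrid n1 n2 n3. \<tau>' t = st N t))"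

end

theory Submission
  imports Defs
begin

lemma rtrancl_pos:
  assumes "(x,y) \<in> R\<^sup>*" and "\<forall>(a,b)\<in>R. 0 < a \<and> 0 < (b::nat)"
  shows "(x = 0) = (y = 0)"
  using assms by (induction rule: rtrancl_induct) auto

lemma step4_zero:
  assumes "step4 n1 n2 n3 t0 lam lam'" and "cdim t = 1"
  shows "(lam t = 0) = (lam' t = 0)"
proof -
  let ?P = "merge_pairs n1 n2 n3 t0 lam"
  obtain f where f1: "\<forall>l. (l, f l) \<in> (?P \<union> ?P\<inverse>)\<^sup>*" and f3: "\<forall>t. cdim t = 1 \<longrightarrow> lam' t = f (lam t)"
    using assms(1) unfolding step4_def Let_def by blast
  have pos: "\<forall>(a,b)\<in>?P \<union> ?P\<inverse>. 0 < a \<and> 0 < b"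
    unfolding merge_pairs_def theta_def by auto
  have "lam' t = f (lam t)" using f3 assms(2) by blast
  then show ?thesis using rtrancl_pos[OF spec[OF f1, of "lam t"] pos] by simp
qed

lemma theta_cong:
  assumes "\<forall>u\<in>Gam n1 n2 n3 t. lam u = mu u"
  shows "theta n1 n2 n3 lam t = theta n1 n2 n3 mu t"
proof -
  have "\<And>l. {s \<in> Gam n1 n2 n3 t. lam s = l} = {s \<in> Gam n1 n2 n3 t. mu s = l}"
    using assms by auto
  then show ?thesis unfolding theta_def by simp
qed

lemma theta_transfer:
  assumes eq: "\<forall>s\<in>Gam n1 n2 n3 t. \<forall>s'\<in>Gam n1 n2 n3 t. (lam s = lam s') = (mu s = mu s')"
    and pos: "\<forall>s\<in>Gam n1 n2 n3 t. (0 < lam s) = (0 < mu s)"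
    and ne: "theta n1 n2 n3 lam t \<noteq> {}"
  shows "theta n1 n2 n3 mu t \<noteq> {}"
proof -
  obtain l where l: "l > 0" "card {s \<in> Gam n1 n2 n3 t. lam s = l} = 1"
    using ne unfolding theta_def by auto
  then obtain s0 where s0: "{s \<in> Gam n1 n2 n3 t. lam s = l} = {s0}"
    using card_1_singletonE by blast
  have s0G: "s0 \<in> Gam n1 n2 n3 t" and ls0: "lam s0 = l" using s0 by auto
  have "{s \<in> Gam n1 n2 n3 t. mu s = mu s0} = {s \<in> Gam n1 n2 n3 t. lam s = lam s0}"
    using eq s0G by auto
  then have "card {s \<in> Gam n1 n2 n3 t. mu s = mu s0} = 1" using s0 ls0 by simp
  moreover have "mu s0 > 0" using pos s0G ls0 l by auto
  ultimately have "mu s0 \<in> theta n1 n2 n3 mu t" unfolding theta_def by simp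
  then show ?thesis by auto
qed

lemma label_pos:
  assumes "is_LABEL n1 n2 n3 \<sigma> B lam" "t \<in> B" "cdim t \<in> {0,1,2}"
  shows "(0 < lam t) = active n1 n2 n3 lam t"
proof -
  let ?j = "cdim t"
  have inact: "\<not> active n1 n2 n3 lam t \<longrightarrow> lam t = 0"
    using assms unfolding is_LABEL_def by blast
  obtain m where m: "lam ` {u \<in> B. cdim u = ?j \<and> active n1 n2 n3 lam u} = {1..m}"
    using assms unfolding is_LABEL_def Let_def by blast
  have "active n1 n2 n3 lam t \<longrightarrow> lam t \<in> {1..m}"
    using m assms(2) by blast
  then show ?thesis using inact by force
qed

lemma label_eq:
  assumes "is_LABEL n1 n2 n3 \<sigma> B lam" "s \<in> B" "s' \<in> B" "cdim s = 2" "cdim s' = 2"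
    "active n1 n2 n3 lam s" "active n1 n2 n3 lam s'" "cconn n1 n2 n3 s s'"
  shows "(lam s = lam s') = (theta n1 n2 n3 lam s = theta n1 n2 n3 lam s')"
proof -
  let ?A = "{u \<in> B. cdim u = 2 \<and> active n1 n2 n3 lam u}"
  have "\<forall>t\<in>?A. \<forall>t'\<in>?A. lam t = lam t' \<longleftrightarrow> same_class n1 n2 n3 lam ?A t t'"
    using assms(1) unfolding is_LABEL_def Let_def by auto
  moreover have "s \<in> ?A" "s' \<in> ?A" using assms by auto
  ultimately have "lam s = lam s' \<longleftrightarrow> same_class n1 n2 n3 lam ?A s s'"
    by blast
  also have "\<dots> \<longleftrightarrow> theta n1 n2 n3 lam s = theta n1 n2 n3 lam s'"
    unfolding same_class_def using assms by (auto intro!: r_into_rtranclp)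
  finally show ?thesis .
qed

lemma Gam_box:
  assumes "t \<in> {a1..b1} \<times> {a2..b2} \<times> {a3..b3}" "s \<in> Gam n1 n2 n3 t"
    "odd a1" "odd b1" "odd a2" "odd b2" "odd a3" "odd b3"
  shows "s \<in> {a1..b1} \<times> {a2..b2} \<times> {a3..b3}"
proof -
  obtain x y z where t: "t = (x,y,z)" by (cases t) auto
  obtain x' y' z' where s: "s = (x',y',z')" by (cases s) auto
  have n: "nbr6 t s" and c: "cdim s = cdim t + 1" using assms(2) unfolding Gam_def by auto
  show ?thesis using n c assms(1,3-8) unfolding t s
    by (auto split: if_splits) presburger+
qed

lemma cover_axis:
  fixes a :: "nat \<Rightarrow> nat" and m x :: nat
  shows "1 \<le> m \<Longrightarrow> a 0 \<le> x \<Longrightarrow> x \<le> a m \<Longrightarrow> \<exists>k. 1 \<le> k \<and> k \<le> m \<and> a (k-1) \<le> x \<and> x \<le> a k"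
proof (induction m)
  case 0 then show ?case by simp
next
  case (Suc m)
  show ?case
  proof (cases "x \<le> a m")
    case True
    show ?thesis
    proof (cases "m = 0")
      case True then show ?thesis using Suc.prems by (intro exI[where x=1]) auto
    next
      case False then obtain k where "1 \<le> k \<and> k \<le> m \<and> a (k-1) \<le> x \<and> x \<le> a k"
        using Suc.IH Suc.prems \<open>x \<le> a m\<close> by auto
      then show ?thesis by (intro exI[where x=k]) auto
    qed
  next
    case False then show ?thesis using Suc.prems by (intro exI[where x="Suc m"]) auto
  qed
qed

lemma block_global:
  assumes L1: "is_LABEL n1 n2 n3 \<sigma> B lam" and L2: "is_LABEL n1 n2 n3 \<sigma> B' mu"
    and cl1: "\<forall>u\<in>B. Gam n1 n2 n3 u \<subseteq> B" and cl2: "\<forall>u\<in>B'. Gam n1 n2 n3 u \<subseteq> B'"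
    and tB: "t \<in> B" and tB': "t \<in> B'" and tT: "t \<in> tgrid n1 n2 n3" and ct: "cdim t = 1"
  shows "(0 < lam t) = (0 < mu t)"
proof -
  let ?G = "Gam n1 n2 n3 t"
  have sB: "s \<in> B" "s \<in> B'" "cdim s = 2" if "s \<in> ?G" for s
  proof -
    show "s \<in> B" "s \<in> B'" using that cl1 cl2 tB tB' by auto
    show "cdim s = 2" using that ct unfolding Gam_def by auto
  qed
  have th: "theta n1 n2 n3 lam s = theta n1 n2 n3 mu s" if "s \<in> ?G" for s
  proof (rule theta_cong, rule ballI)
    fix u assume u: "u \<in> Gam n1 n2 n3 s"
    have "u \<in> B" "u \<in> B'" using u sB[OF that] cl1 cl2 by auto
    moreover have "cdim u = 3" using u sB[OF that] unfolding Gam_def by auto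
    ultimately show "lam u = mu u" using L1 L2 unfolding is_LABEL_def by auto
  qed
  have act: "active n1 n2 n3 lam s = active n1 n2 n3 mu s" if "s \<in> ?G" for s
    using th[OF that] unfolding active_def by simp
  have pos: "\<forall>s\<in>?G. (0 < lam s) = (0 < mu s)"
  proof
    fix s assume s: "s \<in> ?G"
    have "(0 < lam s) = active n1 n2 n3 lam s" using label_pos[OF L1, of s] sB[OF s] by simp
    moreover have "(0 < mu s) = active n1 n2 n3 mu s" using label_pos[OF L2, of s] sB[OF s] by simp
    ultimately show "(0 < lam s) = (0 < mu s)" using act[OF s] by simp
  qed
  have eq: "\<forall>s\<in>?G. \<forall>s'\<in>?G. (lam s = lam s') = (mu s = mu s')"
  proof (intro ballI)
    fix s s' assume s: "s \<in> ?G" and s': "s' \<in> ?G"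
    have cc: "cconn n1 n2 n3 s s'" unfolding cconn_def using s s' tT by blast
    have p1: "(0 < lam s) = active n1 n2 n3 lam s" "(0 < lam s') = active n1 n2 n3 lam s'"
      using label_pos[OF L1, of s] label_pos[OF L1, of s'] sB[OF s] sB[OF s'] by simp_all
    have p2: "(0 < mu s) = active n1 n2 n3 mu s" "(0 < mu s') = active n1 n2 n3 mu s'"
      using label_pos[OF L2, of s] label_pos[OF L2, of s'] sB[OF s] sB[OF s'] by simp_all
    show "(lam s = lam s') = (mu s = mu s')"
    proof (cases "active n1 n2 n3 lam s \<and> active n1 n2 n3 lam s'")
      case True
      then have "active n1 n2 n3 mu s \<and> active n1 n2 n3 mu s'" using act s s' by simp
      then show ?thesis
        using label_eq[OF L1 sB(1)[OF s] sB(1)[OF s'] sB(3)[OF s] sB(3)[OF s'] _ _ cc]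
          label_eq[OF L2 sB(2)[OF s] sB(2)[OF s'] sB(3)[OF s] sB(3)[OF s'] _ _ cc]
          True th[OF s] th[OF s'] by simp
    next
      case False
      then have "\<not> (active n1 n2 n3 mu s \<and> active n1 n2 n3 mu s')" using act s s' by simp
      then show ?thesis using False p1 p2 act[OF s] act[OF s'] by auto
    qed
  qed
  have "theta n1 n2 n3 lam t \<noteq> {} \<longleftrightarrow> theta n1 n2 n3 mu t \<noteq> {}"
    using theta_transfer[OF eq pos] theta_transfer[of n1 n2 n3 t mu lam] eq pos by metis
  moreover have "(0 < lam t) = active n1 n2 n3 lam t" using label_pos[OF L1 tB] ct by simp
  moreover have "(0 < mu t) = active n1 n2 n3 mu t" using label_pos[OF L2 tB'] ct by simp
  ultimately show ?thesis unfolding active_def by simp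
qed

lemma rt_pos2:
  assumes "\<forall>l. (l, r l) \<in> R\<^sup>*" "\<forall>(a,b)\<in>R. 0 < a \<and> 0 < (b::nat)" "0 < l"
  shows "0 < r l"
  using rtrancl_pos[OF spec[OF assms(1), of l] assms(2)] assms(3) by simp

lemma rt_pos3:
  assumes "\<forall>j\<in>{1,2::nat}. (\<forall>l. (l, r j l) \<in> (R j)\<^sup>*) \<and> Q j"
    "\<forall>(a,b)\<in>R 1. 0 < a \<and> 0 < (b::nat)" "0 < l"
  shows "0 < r 1 l"
  using assms(1) rt_pos2[of "r 1" "R 1" l] assms(2,3) by simp

lemma bw_facts:
  assumes "blockwise_output n1 n2 n3 \<sigma> a1 m1 a2 m2 a3 m3 \<tau>'"
  shows "\<exists>(K::nat) bo lam \<tau>0 (N::nat) e st. bij_betw bo {..<K} ({1..m1} \<times> {1..m2} \<times> {1..m3}) \<and>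
     (\<forall>k<K. is_LABEL n1 n2 n3 \<sigma> (blk a1 a2 a3 (bo k)) (lam k)) \<and>
     (\<forall>t\<in>tgrid n1 n2 n3. cdim t = 1 \<longrightarrow>
         (\<tau>0 t = 0 \<longleftrightarrow> \<not> (\<exists>k<K. t \<in> blk a1 a2 a3 (bo k) \<and> 0 < lam k t))) \<and>
     st 0 = \<tau>0 \<and> (\<forall>i<N. step4 n1 n2 n3 (e i) (st i) (st (Suc i))) \<and>
     (\<forall>t\<in>tgrid n1 n2 n3. \<tau>' t = st N t)"
  using assms unfolding blockwise_output_def Let_def
  apply (elim exE conjE)
  subgoal premises p for K bo lam rep \<tau>0 N e st
  proof -
    have rpos: "0 < l \<Longrightarrow> 0 < rep 1 l" for l
      by (rule rt_pos3[OF p(3)]) auto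
    have "\<forall>t\<in>tgrid n1 n2 n3. cdim t = 1 \<longrightarrow>
         (\<tau>0 t = 0 \<longleftrightarrow> \<not> (\<exists>k<K. t \<in> blk a1 a2 a3 (bo k) \<and> 0 < lam k t))"
    proof (intro ballI impI)
      fix t assume t: "t \<in> tgrid n1 n2 n3" "cdim t = 1"
      then have "cdim t < 3" by simp
      note p5 = p(5)[rule_format, OF t(1) this, unfolded t(2)]
      show "\<tau>0 t = 0 \<longleftrightarrow> \<not> (\<exists>k<K. t \<in> blk a1 a2 a3 (bo k) \<and> 0 < lam k t)"
      proof (cases "\<exists>k<K. t \<in> blk a1 a2 a3 (bo k) \<and> 0 < lam k t")
        case True
        with p5 obtain k where "0 < lam k t" and "\<tau>0 t = rep 1
                        (lam k t + (\<Sum>k'<k. mcount 1 (lam k') (blk a1 a2 a3 (bo k'))))"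
          by auto
        then show ?thesis using rpos True by auto
      next
        case False then show ?thesis using p5 by auto
      qed
    qed
    note T = this
    show ?thesis
      apply (intro exI conjI)
           apply (rule p(1))
          apply (rule p(2))
         apply (rule T)
        apply (rule p(7))
       apply (rule p(8))
      apply (rule p(9))
      done
  qed
  done

lemma block_odd:
  assumes "axis_decomp N a m" "k \<in> {1..m}"
  shows "odd (a (k-1))" "odd (a k)"
  using assms unfolding axis_decomp_def by auto

theorem proposition4:
  fixes n1 n2 n3 :: nat and \<sigma> :: "cell \<Rightarrow> nat"
    and a1 a2 a3 :: "nat \<Rightarrow> nat" and m1 m2 m3 :: nat
    and \<tau> \<tau>' :: "cell \<Rightarrow> nat" and t1 :: cell
  assumes "n1 \<ge> 1" and "n2 \<ge> 1" and "n3 \<ge> 1"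
    and "segment_map n1 n2 n3 \<sigma>"
    and "axis_decomp n1 a1 m1" and "axis_decomp n2 a2 m2" and "axis_decomp n3 a3 m3"
    and "is_LABEL n1 n2 n3 \<sigma> (tgrid n1 n2 n3) \<tau>"
    and "blockwise_output n1 n2 n3 \<sigma> a1 m1 a2 m2 a3 m3 \<tau>'"
    and "t1 \<in> tgrid n1 n2 n3" and "cdim t1 = 1"
  shows "\<tau> t1 = 0 \<longleftrightarrow> \<tau>' t1 = 0"
proof -
  obtain K N :: nat and bo lam \<tau>0 e st where bij: "bij_betw bo {..<K} ({1..m1} \<times> {1..m2} \<times> {1..m3})"
    and lab: "\<forall>k<K. is_LABEL n1 n2 n3 \<sigma> (blk a1 a2 a3 (bo k)) (lam k)"
    and t0: "\<forall>t\<in>tgrid n1 n2 n3. cdim t = 1 \<longrightarrow>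
         (\<tau>0 t = 0 \<longleftrightarrow> \<not> (\<exists>k<K. t \<in> blk a1 a2 a3 (bo k) \<and> 0 < lam k t))"
    and st0: "st 0 = \<tau>0" and stp: "\<forall>i<N. step4 n1 n2 n3 (e i) (st i) (st (Suc i))"
    and fin: "\<forall>t\<in>tgrid n1 n2 n3. \<tau>' t = st N t"
    using bw_facts[OF assms(9)] by (elim exE conjE) blast
  have stz: "i \<le> N \<Longrightarrow> (st i t1 = 0) = (st 0 t1 = 0)" for i
  proof (induction i)
    case 0 then show ?case by simp
  next
    case (Suc i)
    then have "(st i t1 = 0) = (st (Suc i) t1 = 0)"
      using step4_zero[OF spec[OF stp, of i, THEN mp] assms(11)] by simp
    then show ?case using Suc by simp
  qed
  have tau': "(\<tau>' t1 = 0) = (\<tau>0 t1 = 0)" using stz[of N] fin assms(10) st0 by simp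
  obtain x y z where t1: "t1 = (x,y,z)" by (cases t1) auto
  have "1 \<le> x \<and> x \<le> 2*n1-1" "1 \<le> y \<and> y \<le> 2*n2-1" "1 \<le> z \<and> z \<le> 2*n3-1"
    using assms(10) unfolding t1 tgrid_def by auto
  then obtain k1 k2 k3 where
    k1: "1 \<le> k1 \<and> k1 \<le> m1 \<and> a1 (k1-1) \<le> x \<and> x \<le> a1 k1" and
    k2: "1 \<le> k2 \<and> k2 \<le> m2 \<and> a2 (k2-1) \<le> y \<and> y \<le> a2 k2" and
    k3: "1 \<le> k3 \<and> k3 \<le> m3 \<and> a3 (k3-1) \<le> z \<and> z \<le> a3 k3"
    using cover_axis[of m1 a1 x] cover_axis[of m2 a2 y] cover_axis[of m3 a3 z]
      assms(5,6,7) unfolding axis_decomp_def by auto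
  have "(k1,k2,k3) \<in> bo ` {..<K}" using bij k1 k2 k3 unfolding bij_betw_def by auto
  then obtain k0 where k0: "k0 < K" "bo k0 = (k1,k2,k3)" by auto
  have t1B: "t1 \<in> blk a1 a2 a3 (bo k0)" using k0 k1 k2 k3 unfolding t1 by auto
  have blk_main: "(0 < lam k t1) = (0 < \<tau> t1)" if k: "k < K" "t1 \<in> blk a1 a2 a3 (bo k)" for k
  proof -
    obtain j1 j2 j3 where bk: "bo k = (j1,j2,j3)" by (cases "bo k") auto
    have "bo k \<in> {1..m1} \<times> {1..m2} \<times> {1..m3}"
      using bij k(1) unfolding bij_betw_def by blast
    then have j: "j1 \<in> {1..m1}" "j2 \<in> {1..m2}" "j3 \<in> {1..m3}"
      using bk by auto
    have cl1: "\<forall>u\<in>blk a1 a2 a3 (bo k). Gam n1 n2 n3 u \<subseteq> blk a1 a2 a3 (bo k)"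
      unfolding bk blk.simps
      using Gam_box block_odd[OF assms(5) j(1)] block_odd[OF assms(6) j(2)]
        block_odd[OF assms(7) j(3)] by blast
    have cl2: "\<forall>u\<in>tgrid n1 n2 n3. Gam n1 n2 n3 u \<subseteq> tgrid n1 n2 n3"
      unfolding Gam_def by auto
    show ?thesis
      using block_global[OF lab[rule_format, OF k(1)] assms(8) cl1 cl2 k(2) assms(10,10,11)] .
  qed
  have "(\<tau>0 t1 = 0) = (\<tau> t1 = 0)"
    using t0 assms(10,11) blk_main k0(1) t1B by auto
  then show ?thesis using tau' by simp
qed

end
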